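(* Let $L$ be a subspace of $\bigwedge^{k}V$, let $I\subseteq[n]$ be nonempty, and let $a=\min I$. Suppose $N_{j\to i}L=L$ for all $i<j$ with $i,j\in I$. Then $L$ has a basis consisting of elements of the form $x\wedge y$, where $x$ is a homogeneous form in $\bigwedge V^{(I\setminus\{a\})}$ and $y$ is a monomial whose variable set is a subset of $\{e_h:h\in I\}$.
   Context: $\mathbb{F}$ is a field (assumed throughout the paper, for expository purposes, to have characteristic not $2$), $V$ is an $n$-dimensional $\mathbb{F}$-vector space with a fixed basis $e_1,\dots,e_n$, and $\bigwedge V$ its exterior algebra; for $S=\{s_1<\cdots<s_r\}\subseteq[n]$, the monomial $e_S=e_{s_1}\wedge\cdots\wedge e_{s_r}$ has variable set $\{e_s:s\in S\}$, and the monomials with $|S|=k$ form a basis of $\bigwedge^kV$. For $J\subseteq[n]$, $V^{(J)}$ is the span of $\{e_h:h\notin J\}$ (so $V^{(I\setminus\{a\})}$ is spanned by $e_a$ and the $e_h$ with $h\notin I$), $V^{(j)}=V^{(\{j\})}$, and $\bigwedge V^{(J)}$ is viewed as a subalgebra of $\bigwedge V$. Slow shift: for distinct $i,j\in[n]$ and nonzero $m\in\bigwedge^kV$, write uniquely $m=x'+e_j\wedge y'$ with $x'\in\bigwedge^kV^{(j)}$, $y'\in\bigwedge^{k-1}V^{(j)}$, and set $N_{j\to i}m=x'+e_i\wedge y'$ if this is nonzero, and $N_{j\to i}m=e_j\wedge y'$ otherwise (the limit as $t\to0$ of the projective action of $e_j\mapsto e_i+te_j$ fixing the other $e_h$). For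 a subspace $L$, $N_{j\to i}L$ is the span of $\{N_{j\to i}m:m\in L\setminus\{0\}\}$. *)

theory Defs
  imports Main "HOL.Vector_Spaces" "HOL-Library.Function_Algebras"
begin

text \<open>Elements of the exterior algebra of V = F^n (basis e_1..e_n) are represented by their
coefficient functions  S \<mapsto> coefficient of e_S,  for S a subset of {1..n}.\<close>

type_synonym 'a ext = "nat set \<Rightarrow> 'a"

definition escale :: "'a::field \<Rightarrow> 'a ext \<Rightarrow> 'a ext" where
  "escale c f = (\<lambda>S. c * f S)"

text \<open>the whole exterior algebra of V^(J): coefficients supported on subsets of [n] - J\<close>
definition ext_alg :: "nat \<Rightarrow> nat set \<Rightarrow> ('a::field) ext set" where
  "ext_alg n J = {f. \<forall>S. f S \<noteq> 0 \<longrightarrow> S \<subseteq> {1..n} - J}"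

definition ext_deg :: "nat \<Rightarrow> nat set \<Rightarrow> nat \<Rightarrow> ('a::field) ext set" where
  "ext_deg n J k = {f. \<forall>S. f S \<noteq> 0 \<longrightarrow> S \<subseteq> {1..n} - J \<and> card S = k}"

definition emono :: "nat set \<Rightarrow> ('a::field) ext" where
  "emono S = (\<lambda>T. if T = S then 1 else 0)"

text \<open>sign with e_S \<and> e_T = sgn S T e_(S \<union> T) for disjoint S, T\<close>
definition wsign :: "nat set \<Rightarrow> nat set \<Rightarrow> 'a::field" where
  "wsign S T = (-1) ^ card {(s, t). s \<in> S \<and> t \<in> T \<and> t < s}"

definition wedge :: "('a::field) ext \<Rightarrow> 'a ext \<Rightarrow> 'a ext" where
  "wedge x y = (\<lambda>U. if finite U then (\<Sum>S\<in>Pow U. wsign S (U - S) * x S * y (U - S)) else 0)"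

text \<open>unique decomposition m = x' + e_j \<and> y' with x', y' in the exterior algebra of V^(j)\<close>
definition slow_split :: "nat \<Rightarrow> nat \<Rightarrow> ('a::field) ext \<Rightarrow> 'a ext \<times> 'a ext" where
  "slow_split n j m = (THE (x', y'). x' \<in> ext_alg n {j} \<and> y' \<in> ext_alg n {j} \<and>
                          m = x' + wedge (emono {j}) y')"

definition slow_shift :: "nat \<Rightarrow> nat \<Rightarrow> nat \<Rightarrow> ('a::field) ext \<Rightarrow> 'a ext" where
  "slow_shift n j i m = (let (x', y') = slow_split n j m in
     if x' + wedge (emono {i}) y' \<noteq> 0 then x' + wedge (emono {i}) y'
     else wedge (emono {j}) y')"

definition slow_shift_space :: "nat \<Rightarrow> nat \<Rightarrow> nat \<Rightarrow> ('a::field) ext set \<Rightarrow> 'a ext set" where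
  "slow_shift_space n j i L = module.span escale (slow_shift n j i ` (L - {0}))"

end

theory Submission
  imports Defs
begin

interpretation E: vector_space "escale :: 'a::field \<Rightarrow> 'a ext \<Rightarrow> 'a ext"
  by unfold_locales (auto simp: escale_def fun_eq_iff algebra_simps)

definition restr :: "(nat set \<Rightarrow> bool) \<Rightarrow> ('a::field) ext \<Rightarrow> 'a ext" where
  "restr P m = (\<lambda>U. if P U then m U else 0)"

lemma wsign_sq: "wsign A B * wsign A B = (1::'a::field)"
  unfolding wsign_def by (simp add: power_mult_distrib[symmetric])

lemma wsign_nz: "wsign A B \<noteq> (0::'a::field)"
  using wsign_sq[of A B] by (metis mult_zero_left zero_neq_one)

lemma wedge_emono_left:
  "wedge (emono A) y U = (if finite U \<and> A \<subseteq> U then wsign A (U - A) * y (U - A) else (0::'a::field))"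
proof (cases "finite U")
  case True
  have "(\<Sum>S\<in>Pow U. wsign S (U - S) * emono A S * y (U - S)) =
        (\<Sum>S\<in>Pow U. if S = A then wsign A (U - A) * y (U - A) else (0::'a))"
    by (rule sum.cong) (auto simp: emono_def)
  also have "\<dots> = (if A \<subseteq> U then wsign A (U - A) * y (U - A) else 0)"
    using True by (simp add: sum.delta)
  finally show ?thesis using True by (simp add: wedge_def)
qed (simp add: wedge_def)

lemma wedge_emono_right:
  "wedge x (emono T) U = (if finite U \<and> T \<subseteq> U then wsign (U - T) T * x (U - T) else (0::'a::field))"
proof (cases "finite U")
  case True
  have "(\<Sum>S\<in>Pow U. wsign S (U - S) * x S * emono T (U - S)) =
        (\<Sum>S\<in>Pow U. if S = U - T then (if T \<subseteq> U then wsign (U - T) T * x (U - T) else 0) else (0::'a))"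
  proof (rule sum.cong)
    fix S assume S: "S \<in> Pow U"
    show "wsign S (U - S) * x S * emono T (U - S) =
      (if S = U - T then (if T \<subseteq> U then wsign (U - T) T * x (U - T) else 0) else (0::'a))"
    proof (cases "U - S = T")
      case True
      then have "S = U - T" "T \<subseteq> U" using S by auto
      then show ?thesis using True by (simp add: emono_def)
    next
      case False
      then have "S = U - T \<Longrightarrow> \<not> T \<subseteq> U" using S by auto
      then show ?thesis using False by (auto simp: emono_def)
    qed
  qed simp
  also have "\<dots> = (if T \<subseteq> U then wsign (U - T) T * x (U - T) else 0)"
    using True by (simp add: sum.delta)
  finally show ?thesis using True by (simp add: wedge_def)
qed (simp add: wedge_def)

lemma wedge_zero: "wedge x (0::('a::field) ext) = 0"
  by (simp add: wedge_def fun_eq_iff)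

lemma ext_alg_fin: "f \<in> ext_alg n J \<Longrightarrow> f U \<noteq> 0 \<Longrightarrow> finite U \<and> U \<subseteq> {1..n} - J"
  unfolding ext_alg_def by (auto intro: finite_subset)

lemma split_unique:
  fixes x1 :: "('a::field) ext"
  assumes a: "x1 \<in> ext_alg n {j}" "y1 \<in> ext_alg n {j}" "x2 \<in> ext_alg n {j}" "y2 \<in> ext_alg n {j}"
    and e: "x1 + wedge (emono {j}) y1 = x2 + wedge (emono {j}) y2"
  shows "x1 = x2 \<and> y1 = y2"
proof
  show "x1 = x2"
  proof
    fix U
    show "x1 U = x2 U"
    proof (cases "j \<in> U")
      case True
      then have "x1 U = 0" "x2 U = 0" using a ext_alg_fin by blast+
      then show ?thesis by simp
    next
      case False
      have "(x1 + wedge (emono {j}) y1) U = (x2 + wedge (emono {j}) y2) U" using e by simp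
      then show ?thesis using False by (simp add: wedge_emono_left)
    qed
  qed
  show "y1 = y2"
  proof
    fix R
    show "y1 R = y2 R"
    proof (cases "j \<notin> R \<and> finite R")
      case False
      then have "y1 R = 0" "y2 R = 0" using a ext_alg_fin by blast+
      then show ?thesis by simp
    next
      case True
      let ?U = "insert j R"
      have "x1 ?U = 0" "x2 ?U = 0" using a ext_alg_fin by blast+
      moreover have "(x1 + wedge (emono {j}) y1) ?U = (x2 + wedge (emono {j}) y2) ?U" using e by simp
      ultimately have "wsign {j} R * y1 R = wsign {j} R * y2 R"
        using True by (simp add: wedge_emono_left)
      then show ?thesis using wsign_nz by auto
    qed
  qed
qed

lemma split_eq:
  fixes x :: "('a::field) ext"
  assumes "x \<in> ext_alg n {j}" "y \<in> ext_alg n {j}"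
  shows "slow_split n j (x + wedge (emono {j}) y) = (x, y)"
  unfolding slow_split_def
proof (rule the_equality)
  show "case (x, y) of (x', y') \<Rightarrow> x' \<in> ext_alg n {j} \<and> y' \<in> ext_alg n {j} \<and>
      x + wedge (emono {j}) y = x' + wedge (emono {j}) y'" using assms by simp
next
  fix p assume "case p of (x', y') \<Rightarrow> x' \<in> ext_alg n {j} \<and> y' \<in> ext_alg n {j} \<and>
      x + wedge (emono {j}) y = x' + wedge (emono {j}) y'"
  then show "p = (x, y)" using split_unique[OF assms] by (cases p) fastforce
qed

lemma split_exists:
  fixes m :: "('a::field) ext"
  assumes m: "m \<in> ext_alg n {}"
  obtains y where "restr (\<lambda>U. j \<notin> U) m \<in> ext_alg n {j}" "y \<in> ext_alg n {j}"
    "m = restr (\<lambda>U. j \<notin> U) m + wedge (emono {j}) y"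
proof
  define y where "y = (\<lambda>R. if j \<notin> R then wsign {j} R * m (insert j R) else 0)"
  show "restr (\<lambda>U. j \<notin> U) m \<in> ext_alg n {j}"
    using m unfolding ext_alg_def restr_def by auto
  show "y \<in> ext_alg n {j}"
    using m unfolding ext_alg_def y_def by (auto split: if_splits)
  show "m = restr (\<lambda>U. j \<notin> U) m + wedge (emono {j}) y"
  proof
    fix U
    show "m U = (restr (\<lambda>U. j \<notin> U) m + wedge (emono {j}) y) U"
    proof (cases "j \<in> U")
      case False
      then show ?thesis by (simp add: restr_def wedge_emono_left)
    next
      case True
      show ?thesis
      proof (cases "finite U")
        case False
        then have "m U = 0" using m ext_alg_fin by blast
        then show ?thesis using False by (simp add: restr_def wedge_emono_left)
      next
        case fin: True
        have "insert j (U - {j}) = U" using True by auto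
        then show ?thesis using True fin
          by (simp add: restr_def wedge_emono_left y_def mult.assoc[symmetric] wsign_sq)
      qed
    qed
  qed
qed

lemma emono_i_alg:
  fixes y :: "('a::field) ext"
  assumes "y \<in> ext_alg n {j}" "i \<in> {1..n}" "i \<noteq> j"
  shows "wedge (emono {i}) y \<in> ext_alg n {j}"
  unfolding ext_alg_def
proof (intro CollectI allI impI)
  fix S assume "wedge (emono {i}) y S \<noteq> 0"
  then have iS: "i \<in> S" and "y (S - {i}) \<noteq> 0" by (auto simp: wedge_emono_left split: if_splits)
  then have "S - {i} \<subseteq> {1..n} - {j}" using assms(1) unfolding ext_alg_def by blast
  then show "S \<subseteq> {1..n} - {j}" using iS assms(2,3) by blast
qed

lemma zero_alg: "0 \<in> ext_alg n J"
  by (simp add: ext_alg_def)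

lemma neg_alg: "f \<in> ext_alg n J \<Longrightarrow> - f \<in> ext_alg n J"
  by (simp add: ext_alg_def)

lemma close_restr:
  fixes L :: "('a::field) ext set"
  assumes sub: "E.subspace L" and Lalg: "L \<subseteq> ext_alg n {}"
    and ij: "i \<in> {1..n}" "i \<noteq> j"
    and shift: "\<And>m. m \<in> L \<Longrightarrow> m \<noteq> 0 \<Longrightarrow> slow_shift n j i m \<in> L"
    and mL: "m \<in> L"
  shows "restr (\<lambda>U. j \<notin> U) m \<in> L"
proof -
  obtain xx where xxd: "xx = restr (\<lambda>U. j \<notin> U) m" by blast
  obtain y where x: "xx \<in> ext_alg n {j}" and y: "y \<in> ext_alg n {j}"
    and m: "m = xx + wedge (emono {j}) y"
    using split_exists[of m n j] mL Lalg xxd by blast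
  have spl: "slow_split n j m = (xx, y)" using m split_eq[OF x y] by simp
  have nz: "m \<noteq> 0" if "y \<noteq> 0"
  proof
    assume "m = 0"
    then have "xx + wedge (emono {j}) y = 0 + wedge (emono {j}) 0" using m by (simp add: wedge_zero)
    then show False using split_unique[OF x y zero_alg zero_alg] that by blast
  qed
  have "xx \<in> L"
  proof (cases "y = 0")
    case True
    then show ?thesis using m mL by (simp add: wedge_zero)
  next
    case ynz: False
    show ?thesis
    proof (cases "xx + wedge (emono {i}) y = 0")
      case True
      then have "slow_shift n j i m = wedge (emono {j}) y"
        using spl by (simp add: slow_shift_def)
      then have "wedge (emono {j}) y \<in> L" using shift[OF mL nz[OF ynz]] by simp
      then have "m - wedge (emono {j}) y \<in> L" using E.subspace_diff[OF sub mL] by blast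
      then show ?thesis using m by (metis add_diff_cancel)
    next
      case False
      then have s: "xx + wedge (emono {i}) y \<in> L"
        using spl shift[OF mL nz[OF ynz]] by (simp add: slow_shift_def)
      define m2 where "m2 = m - (xx + wedge (emono {i}) y)"
      have m2L: "m2 \<in> L" unfolding m2_def using E.subspace_diff[OF sub mL s] .
      have xi: "- wedge (emono {i}) y \<in> ext_alg n {j}"
        using neg_alg emono_i_alg[OF y ij] by blast
      have m2: "m2 = - wedge (emono {i}) y + wedge (emono {j}) y"
        unfolding m2_def by (subst m) (simp add: algebra_simps)
      have spl2: "slow_split n j m2 = (- wedge (emono {i}) y, y)"
        using m2 split_eq[OF xi y] by simp
      have m2nz: "m2 \<noteq> 0"
      proof
        assume "m2 = 0"
        then have "- wedge (emono {i}) y + wedge (emono {j}) y = 0 + wedge (emono {j}) 0"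
          using m2 by (simp add: wedge_zero)
        then show False using split_unique[OF xi y zero_alg zero_alg] ynz by blast
      qed
      have "slow_shift n j i m2 = wedge (emono {j}) y"
        using spl2 by (simp add: slow_shift_def)
      then have "wedge (emono {j}) y \<in> L" using shift[OF m2L m2nz] by simp
      then have "m - wedge (emono {j}) y \<in> L" using E.subspace_diff[OF sub mL] by blast
      then show ?thesis using m by (metis add_diff_cancel)
    qed
  qed
  then show ?thesis using xxd by simp
qed

lemma close_multi:
  fixes L :: "('a::field) ext set"
  assumes c1: "\<And>j m. j \<in> J \<Longrightarrow> m \<in> L \<Longrightarrow> restr (\<lambda>U. j \<notin> U) m \<in> L"
    and c2: "\<And>j m. j \<in> J \<Longrightarrow> m \<in> L \<Longrightarrow> restr (\<lambda>U. j \<in> U) m \<in> L"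
    and K: "finite K" "K \<subseteq> J" and mL: "m \<in> L"
  shows "restr (\<lambda>U. U \<inter> K = T \<inter> K) m \<in> L"
  using K
proof (induction K rule: finite_induct)
  case empty
  then show ?case using mL by (simp add: restr_def)
next
  case (insert j K)
  have jJ: "j \<in> J" using insert by auto
  have IH: "restr (\<lambda>U. U \<inter> K = T \<inter> K) m \<in> L" using insert by auto
  have eq: "restr (\<lambda>U. U \<inter> insert j K = T \<inter> insert j K) m =
    (if j \<in> T then restr (\<lambda>U. j \<in> U) (restr (\<lambda>U. U \<inter> K = T \<inter> K) m)
     else restr (\<lambda>U. j \<notin> U) (restr (\<lambda>U. U \<inter> K = T \<inter> K) m))"
  proof -
    have "\<And>U. (U \<inter> insert j K = T \<inter> insert j K) = ((j \<in> U \<longleftrightarrow> j \<in> T) \<and> U \<inter> K = T \<inter> K)"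
      using insert(2) by blast
    then show ?thesis by (simp add: restr_def fun_eq_iff)
  qed
  show ?case unfolding eq using c1[OF jJ IH] c2[OF jJ IH] by simp
qed

lemma sum_fun_app: "(\<Sum>x\<in>A. f x) (U::nat set) = (\<Sum>x\<in>A. f x U :: 'a::field)"
  by (induct A rule: infinite_finite_induct) simp_all

lemma form:
  fixes f :: "('a::field) ext"
  assumes f: "f \<in> ext_deg n {} k" and T: "T \<subseteq> J" and supp: "\<forall>U. f U \<noteq> 0 \<longrightarrow> U \<inter> J = T"
  shows "\<exists>x d. x \<in> ext_deg n J d \<and> f = wedge x (emono T)"
proof -
  define x where "x = (\<lambda>R. if R \<inter> J = {} then wsign R T * f (R \<union> T) else 0)"
  have "x \<in> ext_deg n J (k - card T)"
    unfolding ext_deg_def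
  proof (intro CollectI allI impI)
    fix R assume "x R \<noteq> 0"
    then have RJ: "R \<inter> J = {}" and fR: "f (R \<union> T) \<noteq> 0" unfolding x_def by (auto split: if_splits)
    have "R \<union> T \<subseteq> {1..n}" "card (R \<union> T) = k" using f fR unfolding ext_deg_def by auto
    moreover have "finite R" "finite T" using calculation(1) by (auto intro: finite_subset)
    moreover have "R \<inter> T = {}" using RJ T by blast
    ultimately show "R \<subseteq> {1..n} - J \<and> card R = k - card T"
      using RJ by (auto simp: card_Un_disjoint)
  qed
  moreover have "f = wedge x (emono T)"
  proof
    fix U
    show "f U = wedge x (emono T) U"
    proof (cases "f U = 0")
      case False
      then have U: "U \<subseteq> {1..n}" "U \<inter> J = T" using f supp unfolding ext_deg_def by auto
      have "finite U" using U(1) finite_subset by blast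
      moreover have "T \<subseteq> U" using U(2) by blast
      moreover have "(U - T) \<inter> J = {}" using U(2) by blast
      moreover have "(U - T) \<union> T = U" using U(2) by blast
      ultimately show ?thesis
        by (simp add: wedge_emono_right x_def mult.assoc[symmetric] wsign_sq)
    next
      case True
      show ?thesis
      proof (cases "finite U \<and> T \<subseteq> U")
        case True
        then have "(U - T) \<union> T = U" by auto
        then show ?thesis using True \<open>f U = 0\<close>
          by (simp add: wedge_emono_right x_def)
      next
        case False
        then show ?thesis using \<open>f U = 0\<close> by (auto simp: wedge_emono_right)
      qed
    qed
  qed
  ultimately show ?thesis by blast
qed

theorem theorem3p13:
  fixes n k :: nat and L :: "('a::field) ext set" and I :: "nat set"
  assumes char: "(2::'a) \<noteq> 0"
    and L_sub: "module.subspace escale L"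
    and L_deg: "L \<subseteq> ext_deg n {} k"
    and I_sub: "I \<subseteq> {1..n}" and I_ne: "I \<noteq> {}"
    and inv: "\<And>i j. i \<in> I \<Longrightarrow> j \<in> I \<Longrightarrow> i < j \<Longrightarrow> slow_shift_space n j i L = L"
  shows "\<exists>B. B \<subseteq> L \<and> \<not> module.dependent escale B \<and> module.span escale B = L \<and>
           (\<forall>b\<in>B. \<exists>x y d S. x \<in> ext_deg n (I - {Min I}) d \<and> S \<subseteq> I \<and> y = emono S \<and>
                               b = wedge x y)"
proof -
  have finI: "finite I" using I_sub finite_subset by blast
  define a where "a = Min I"
  define J where "J = I - {a}"
  have aI: "a \<in> I" unfolding a_def using finI I_ne by simp
  have an: "a \<in> {1..n}" using aI I_sub by blast
  have finJ: "finite J" unfolding J_def using finI by simp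
  have Lalg: "L \<subseteq> ext_alg n {}" using L_deg unfolding ext_deg_def ext_alg_def by blast
  have shift: "slow_shift n j a m \<in> L" if j: "j \<in> J" and m: "m \<in> L" "m \<noteq> 0" for j m
  proof -
    have jI: "j \<in> I" and ja: "j \<noteq> a" using j unfolding J_def by auto
    have "a \<le> j" unfolding a_def using finI jI by simp
    then have "a < j" using ja by simp
    then have "slow_shift_space n j a L = L" using inv aI j unfolding J_def by blast
    moreover have "slow_shift n j a m \<in> slow_shift_space n j a L"
      unfolding slow_shift_space_def using m by (intro E.span_base) blast
    ultimately show ?thesis by simp
  qed
  have c1: "restr (\<lambda>U. j \<notin> U) m \<in> L" if "j \<in> J" "m \<in> L" for j m
  proof -
    have "a \<noteq> j" using that(1) unfolding J_def by blast
    then show ?thesis by (rule close_restr[OF L_sub Lalg an _ shift[OF that(1)] that(2)])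
  qed
  have c2: "restr (\<lambda>U. j \<in> U) m \<in> L" if "j \<in> J" "m \<in> L" for j m
  proof -
    have "restr (\<lambda>U. j \<in> U) m = m - restr (\<lambda>U. j \<notin> U) m" by (simp add: restr_def fun_eq_iff)
    then show ?thesis using E.subspace_diff[OF L_sub that(2) c1[OF that]] by simp
  qed
  have PT: "restr (\<lambda>U. U \<inter> J = T) m \<in> L" if "T \<subseteq> J" "m \<in> L" for T m
    using close_multi[of J L, OF c1 c2 finJ order_refl that(2), of T] that(1)
    by (simp add: Int_absorb2)
  define G where "G = {f \<in> L. \<exists>T \<subseteq> J. \<forall>U. f U \<noteq> 0 \<longrightarrow> U \<inter> J = T}"
  have GL: "G \<subseteq> L" unfolding G_def by blast
  have LG: "L \<subseteq> E.span G"
  proof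
    fix m assume mL: "m \<in> L"
    have meq: "m = (\<Sum>T\<in>Pow J. restr (\<lambda>U. U \<inter> J = T) m)"
    proof
      fix U
      have "(\<Sum>T\<in>Pow J. restr (\<lambda>U. U \<inter> J = T) m) U = (\<Sum>T\<in>Pow J. if U \<inter> J = T then m U else 0)"
        by (simp add: sum_fun_app restr_def)
      also have "\<dots> = m U" using finJ by (simp add: sum.delta')
      finally show "m U = (\<Sum>T\<in>Pow J. restr (\<lambda>U. U \<inter> J = T) m) U" by simp
    qed
    have "(\<Sum>T\<in>Pow J. restr (\<lambda>U. U \<inter> J = T) m) \<in> E.span G"
    proof (rule E.span_sum)
      fix T assume "T \<in> Pow J"
      then have T: "T \<subseteq> J" by simp
      have "\<forall>U. restr (\<lambda>U. U \<inter> J = T) m U \<noteq> 0 \<longrightarrow> U \<inter> J = T"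
        by (simp add: restr_def)
      then have "restr (\<lambda>U. U \<inter> J = T) m \<in> G"
        unfolding G_def using PT[OF T mL] T by blast
      then show "restr (\<lambda>U. U \<inter> J = T) m \<in> E.span G" by (rule E.span_base)
    qed
    then show "m \<in> E.span G" by (rule ssubst[OF meq])
  qed
  obtain B where B0: "{} \<subseteq> B" and B: "B \<subseteq> G" "E.independent B" "G \<subseteq> E.span B"
    by (rule E.maximal_independent_subset_extend[OF empty_subsetI E.independent_empty])
  have BL: "B \<subseteq> L" using B(1) GL by (rule order_trans)
  have "E.span G \<subseteq> E.span B" using E.span_mono[OF B(3)] unfolding E.span_span .
  then have "L \<subseteq> E.span B" using LG by (rule order_trans[rotated])
  then have spanB: "E.span B = L" using E.span_subspace[OF BL _ L_sub] by blast
  have formB: "\<exists>x y d S. x \<in> ext_deg n (I - {Min I}) d \<and> S \<subseteq> I \<and> y = emono S \<and> b = wedge x y"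
    if "b \<in> B" for b
  proof -
    have "b \<in> G" using that B(1) by (rule subsetD[rotated])
    then have bL: "b \<in> L" and "\<exists>T \<subseteq> J. \<forall>U. b U \<noteq> 0 \<longrightarrow> U \<inter> J = T"
      unfolding G_def by simp_all
    then obtain T where T: "T \<subseteq> J" and supp: "\<forall>U. b U \<noteq> 0 \<longrightarrow> U \<inter> J = T"
      by blast
    from form[OF subsetD[OF L_deg bL] T supp] obtain x d
      where xd: "x \<in> ext_deg n J d" "b = wedge x (emono T)" by blast
    have TI: "T \<subseteq> I" using T unfolding J_def by blast
    have xd': "x \<in> ext_deg n (I - {Min I}) d" using xd(1) unfolding J_def a_def .
    show ?thesis
      by (rule exI[of _ x], rule exI[of _ "emono T"], rule exI[of _ d], rule exI[of _ T])
         (simp only: xd' TI xd(2) simp_thms)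
  qed
  have "\<forall>b\<in>B. \<exists>x y d S. x \<in> ext_deg n (I - {Min I}) d \<and> S \<subseteq> I \<and> y = emono S \<and> b = wedge x y"
    using formB by (rule ballI)
  with BL B(2) spanB show ?thesis by (intro exI[of _ B] conjI)
qed

end
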